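(* Let $G$ be a bipartite graph with colour classes $V$ and $W$, where $\#V=v$ and $\#W=w$, containing no cycle of length $4$ and no cycle of length $6$. Then its number of edges $e$ satisfies $$e\le\begin{cases}2^{1/3}(vw)^{2/3}&\text{if }\max(v,w)\le\lfloor\min(v,w)^2/4\rfloor,\\ \lfloor\min(v,w)^2/4\rfloor+\max(v,w)&\text{otherwise.}\end{cases}$$ Moreover the second bound is attained: with $v=\min(v,w)$, split $V=V_1\cup V_2$ with $\#V_1=\lceil v/2\rceil$, $\#V_2=\lfloor v/2\rfloor$, let $W$ consist of one vertex for each pair $\{x,y\}$ with $x\in V_1$, $y\in V_2$ (adjacent to $x$ and $y$), together with $\lceil w-v^2/4\rceil$ further vertices each adjacent to exactly one vertex of $V$; this graph has no cycle of length $4$ or $6$ and has exactly $\lfloor v^2/4\rfloor+w$ edges. *)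

theory Defs
  imports Complex_Main
begin

definition bipartite_graph :: "('a \<Rightarrow> 'a \<Rightarrow> bool) \<Rightarrow> 'a set \<Rightarrow> 'a set \<Rightarrow> bool" where
  "bipartite_graph adj V W \<longleftrightarrow>
     finite V \<and> finite W \<and> V \<inter> W = {} \<and>
     (\<forall>x y. adj x y \<longleftrightarrow> adj y x) \<and> (\<forall>x. \<not> adj x x) \<and>
     (\<forall>x y. adj x y \<longrightarrow> (x \<in> V \<and> y \<in> W) \<or> (x \<in> W \<and> y \<in> V))"

definition has_cycle :: "('a \<Rightarrow> 'a \<Rightarrow> bool) \<Rightarrow> nat \<Rightarrow> bool" where
  "has_cycle adj k \<longleftrightarrow>
     (\<exists>u :: nat \<Rightarrow> 'a. inj_on u {..<k} \<and> (\<forall>i<k. adj (u i) (u (Suc i mod k))))"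

definition num_edges :: "('a \<Rightarrow> 'a \<Rightarrow> bool) \<Rightarrow> nat" where
  "num_edges adj = card {{x, y} | x y. adj x y}"

text \<open>L i (i < v) are the vertices of V, with
  V1 = {L i | i < ceil(v/2)}, V2 = {L i | ceil(v/2) \<le> i < v};
  P a b is the W-vertex for the pair (L a, L b) with L a in V1, L b in V2;
  X k (k < ceil(w - v^2/4)) are the further W-vertices, X k adjacent to L (g k).\<close>

datatype cvert = L nat | P nat nat | X nat

definition n_extra :: "nat \<Rightarrow> nat \<Rightarrow> nat" where
  "n_extra v w = nat \<lceil>real w - real v ^ 2 / 4\<rceil>"

fun cedge :: "nat \<Rightarrow> nat \<Rightarrow> (nat \<Rightarrow> nat) \<Rightarrow> cvert \<Rightarrow> cvert \<Rightarrow> bool" where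
  "cedge v w g (L i) (P a b) \<longleftrightarrow>
     a < nat \<lceil>real v / 2\<rceil> \<and> nat \<lceil>real v / 2\<rceil> \<le> b \<and> b < v \<and> (i = a \<or> i = b)"
| "cedge v w g (L i) (X k) \<longleftrightarrow> k < n_extra v w \<and> i = g k"
| "cedge v w g _ _ \<longleftrightarrow> False"

definition cadj :: "nat \<Rightarrow> nat \<Rightarrow> (nat \<Rightarrow> nat) \<Rightarrow> cvert \<Rightarrow> cvert \<Rightarrow> bool" where
  "cadj v w g x y \<longleftrightarrow> cedge v w g x y \<or> cedge v w g y x"

definition cV :: "nat \<Rightarrow> cvert set" where
  "cV v = L ` {..<v}"

definition cW :: "nat \<Rightarrow> nat \<Rightarrow> cvert set" where
  "cW v w = {P a b | a b. a < nat \<lceil>real v / 2\<rceil> \<and> nat \<lceil>real v / 2\<rceil> \<le> b \<and> b < v}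
            \<union> X ` {..<n_extra v w}"

end

theory Submission
  imports Defs "HOL-Analysis.Analysis"
begin


lemma cyc4:
  assumes "distinct [a,b,c,d]" "adj a b" "adj b c" "adj c d" "adj d a"
  shows "has_cycle adj 4"
proof -
  let ?u = "\<lambda>i. [a,b,c,d] ! i"
  have "inj_on ?u {..<4}" using assms(1)
    by (auto simp: inj_on_def nth_eq_iff_index_eq)
  moreover have "\<forall>i<4. adj (?u i) (?u (Suc i mod 4))"
  proof (intro allI impI)
    fix i :: nat assume "i < 4"
    then have "i = 0 \<or> i = 1 \<or> i = 2 \<or> i = 3" by auto
    then show "adj (?u i) (?u (Suc i mod 4))" using assms by auto
  qed
  ultimately show ?thesis unfolding has_cycle_def by blast
qed

lemma cyc6:
  assumes "distinct [a,b,c,d,e,f]" "adj a b" "adj b c" "adj c d" "adj d e" "adj e f" "adj f a"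
  shows "has_cycle adj 6"
proof -
  let ?u = "\<lambda>i. [a,b,c,d,e,f] ! i"
  have "inj_on ?u {..<6}" using assms(1)
    by (auto simp: inj_on_def nth_eq_iff_index_eq)
  moreover have "\<forall>i<6. adj (?u i) (?u (Suc i mod 6))"
  proof (intro allI impI)
    fix i :: nat assume "i < 6"
    then have "i = 0 \<or> i = 1 \<or> i = 2 \<or> i = 3 \<or> i = 4 \<or> i = 5" by auto
    then show "adj (?u i) (?u (Suc i mod 6))" using assms by auto
  qed
  ultimately show ?thesis unfolding has_cycle_def by blast
qed

lemma cyc4_inv:
  assumes "has_cycle adj 4"
  shows "\<exists>a b c d. distinct [a,b,c,d] \<and> adj a b \<and> adj b c \<and> adj c d \<and> adj d a"
proof -
  obtain u where u: "inj_on u {..<4}" "\<forall>i<4. adj (u i) (u (Suc i mod 4))"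
    using assms unfolding has_cycle_def by blast
  have s: "set [0..<4] = {..<4::nat}" by (simp add: atLeast0LessThan)
  have "distinct (map u [0..<4])" unfolding distinct_map s using u(1) by simp
  then have dist: "distinct [u 0, u 1, u 2, u 3]" by (simp add: upt_rec numeral_eq_Suc)
  have h: "adj (u i) (u (Suc i mod 4))" if "i < 4" for i using u(2) that by blast
  have "adj (u 0) (u 1)" using h[of 0] by simp
  moreover have "adj (u 1) (u 2)" using h[of 1] unfolding Suc_1 by simp
  moreover have "adj (u 2) (u 3)" using h[of 2] by simp
  moreover have "adj (u 3) (u 0)" using h[of 3] by simp
  ultimately show ?thesis using dist
    apply (rule_tac exI[of _ "u 0"], rule_tac exI[of _ "u 1"], rule_tac exI[of _ "u 2"], rule_tac exI[of _ "u 3"])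
    by simp
qed

lemma cyc6_inv:
  assumes "has_cycle adj 6"
  shows "\<exists>a b c d e f. distinct [a,b,c,d,e,f] \<and> adj a b \<and> adj b c \<and> adj c d \<and> adj d e \<and> adj e f \<and> adj f a"
proof -
  obtain u where u: "inj_on u {..<6}" "\<forall>i<6. adj (u i) (u (Suc i mod 6))"
    using assms unfolding has_cycle_def by blast
  have s: "set [0..<6] = {..<6::nat}" by (simp add: atLeast0LessThan)
  have "distinct (map u [0..<6])" unfolding distinct_map s using u(1) by simp
  then have dist: "distinct [u 0, u 1, u 2, u 3, u 4, u 5]" by (simp add: upt_rec numeral_eq_Suc)
  have h: "adj (u i) (u (Suc i mod 6))" if "i < 6" for i using u(2) that by blast
  have "adj (u 0) (u 1)" using h[of 0] by simp
  moreover have "adj (u 1) (u 2)" using h[of 1] unfolding Suc_1 by simp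
  moreover have "adj (u 2) (u 3)" using h[of 2] by simp
  moreover have "adj (u 3) (u 4)" using h[of 3] by simp
  moreover have "adj (u 4) (u 5)" using h[of 4] by simp
  moreover have "adj (u 5) (u 0)" using h[of 5] by simp
  ultimately show ?thesis using dist
    apply (rule_tac exI[of _ "u 0"], rule_tac exI[of _ "u 1"], rule_tac exI[of _ "u 2"], rule_tac exI[of _ "u 3"], rule_tac exI[of _ "u 4"], rule_tac exI[of _ "u 5"])
    by simp
qed



definition Ed :: "('a \<Rightarrow> 'a \<Rightarrow> bool) \<Rightarrow> 'a set \<Rightarrow> 'a set \<Rightarrow> ('a \<times> 'a) set" where
  "Ed adj V W = {(x,y). x \<in> V \<and> y \<in> W \<and> adj x y}"

lemma bip_facts:
  assumes "bipartite_graph adj V W"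
  shows "finite V" "finite W" "V \<inter> W = {}" "\<And>x y. adj x y \<longleftrightarrow> adj y x" "\<And>x. \<not> adj x x"
    "\<And>x y. adj x y \<Longrightarrow> (x \<in> V \<and> y \<in> W) \<or> (x \<in> W \<and> y \<in> V)"
  using assms unfolding bipartite_graph_def by blast+

lemma bip_swap: "bipartite_graph adj V W \<Longrightarrow> bipartite_graph adj W V"
  unfolding bipartite_graph_def by blast

lemma num_edges_Ed:
  assumes bip: "bipartite_graph adj V W"
  shows "num_edges adj = card (Ed adj V W)"
proof -
  note b = bip_facts[OF bip]
  have eq: "{{x, y} | x y. adj x y} = (\<lambda>(x,y). {x,y}) ` Ed adj V W"
  proof (rule set_eqI, rule iffI)
    fix s assume "s \<in> {{x, y} | x y. adj x y}"
    then obtain x y where s: "s = {x,y}" "adj x y" by blast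
    then have "(x \<in> V \<and> y \<in> W) \<or> (y \<in> V \<and> x \<in> W)" using b(6) by blast
    then show "s \<in> (\<lambda>(x,y). {x,y}) ` Ed adj V W"
    proof
      assume "x \<in> V \<and> y \<in> W" then show ?thesis using s unfolding Ed_def by force
    next
      assume "y \<in> V \<and> x \<in> W" then have "(y,x) \<in> Ed adj V W" using s b(4) unfolding Ed_def by blast
      moreover have "s = {y,x}" using s by blast
      ultimately show ?thesis by force
    qed
  next
    fix s assume "s \<in> (\<lambda>(x,y). {x,y}) ` Ed adj V W"
    then show "s \<in> {{x, y} | x y. adj x y}" unfolding Ed_def by auto
  qed
  have "inj_on (\<lambda>(x,y). {x,y}) (Ed adj V W)"
  proof (rule inj_onI, clarify)
    fix x y x' y' assume "(x,y) \<in> Ed adj V W" "(x',y') \<in> Ed adj V W" "{x,y} = {x',y'}"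
    then show "x = x' \<and> y = y'" using b(3) unfolding Ed_def by (auto simp: doubleton_eq_iff)
  qed
  then show ?thesis unfolding num_edges_def eq by (simp add: card_image)
qed

lemma finite_Ed: "bipartite_graph adj V W \<Longrightarrow> finite (Ed adj V W)"
  using bip_facts(1,2)[of adj V W] unfolding Ed_def
  by (rule_tac finite_subset[of _ "V \<times> W"]) auto


lemma bcyc4:
  assumes bip: "bipartite_graph adj V W" and "a \<in> V" "c \<in> V" "b \<in> W" "d \<in> W" "a \<noteq> c" "b \<noteq> d"
    "adj a b" "adj c b" "adj c d" "adj a d"
  shows "has_cycle adj 4"
proof -
  note bb = bip_facts[OF bip]
  have "a \<noteq> b" "a \<noteq> d" "c \<noteq> b" "c \<noteq> d" using assms(2-5) bb(3) by blast+
  then have "distinct [a,b,c,d]" using assms(6,7) by auto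
  moreover have "adj b c" "adj d a" using assms(9,11) bb(4) by blast+
  ultimately show ?thesis using cyc4[of a b c d adj] assms(8,10) by blast
qed

lemma bcyc6:
  assumes bip: "bipartite_graph adj V W" and "a \<in> V" "c \<in> V" "e \<in> V" "b \<in> W" "d \<in> W" "f \<in> W"
    "a \<noteq> c" "a \<noteq> e" "c \<noteq> e" "b \<noteq> d" "b \<noteq> f" "d \<noteq> f"
    "adj a b" "adj c b" "adj c d" "adj e d" "adj e f" "adj a f"
  shows "has_cycle adj 6"
proof -
  note bb = bip_facts[OF bip]
  have "a \<noteq> b" "a \<noteq> d" "a \<noteq> f" "c \<noteq> b" "c \<noteq> d" "c \<noteq> f" "e \<noteq> b" "e \<noteq> d" "e \<noteq> f"
    using assms(2-7) bb(3) by blast+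
  then have "distinct [a,b,c,d,e,f]" using assms(8-13) by auto
  moreover have "adj b c" "adj d e" "adj f a" using assms(15,17,19) bb(4) by blast+
  ultimately show ?thesis using cyc6[of a b c d e f adj] assms(14,16,18) by blast
qed

lemma mantel:
  fixes D :: "('a \<times> 'a) set"
  assumes fin: "finite V" and sub: "D \<subseteq> V \<times> V"
    and sym: "\<And>a b. (a,b) \<in> D \<Longrightarrow> (b,a) \<in> D"
    and tri: "\<And>a b c. (a,b) \<in> D \<Longrightarrow> (b,c) \<in> D \<Longrightarrow> (a,c) \<in> D \<Longrightarrow> False"
  shows "2 * card D \<le> card V ^ 2"
proof -
  define nb where "nb a = {b. (a,b) \<in> D}" for a
  define d where "d a = card (nb a)" for a
  have nbV: "nb a \<subseteq> V" for a using sub by (auto simp: nb_def)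
  have finb: "finite (nb a)" for a using nbV fin finite_subset by blast
  have Dsig: "D = Sigma V nb" using sub by (auto simp: nb_def)
  have cardD: "card D = (\<Sum>a\<in>V. d a)" unfolding Dsig d_def
    by (rule card_SigmaI) (use fin finb in auto)
  have key: "d a + d b \<le> card V" if "(a,b) \<in> D" for a b
  proof -
    have "nb a \<inter> nb b = {}" using tri sym that by (auto simp: nb_def)
    hence "card (nb a \<union> nb b) = d a + d b" by (simp add: d_def card_Un_disjoint finb)
    moreover have "card (nb a \<union> nb b) \<le> card V" by (rule card_mono[OF fin]) (use nbV in auto)
    ultimately show ?thesis by simp
  qed
  have s1: "(\<Sum>(a,b)\<in>D. d a) = (\<Sum>a\<in>V. d a * d a)"
  proof -
    have "(\<Sum>(a,b)\<in>D. d a) = (\<Sum>a\<in>V. \<Sum>b\<in>nb a. d a)" unfolding Dsig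
      by (rule sum.Sigma[symmetric]) (use fin finb in auto)
    also have "\<dots> = (\<Sum>a\<in>V. d a * d a)" by (simp add: d_def)
    finally show ?thesis .
  qed
  have s2: "(\<Sum>(a,b)\<in>D. d b) = (\<Sum>(a,b)\<in>D. d a)"
  proof -
    have im: "(\<lambda>(a,b). (b,a)) ` D = D" using sym by force
    have inj: "inj_on (\<lambda>(a,b). (b,a)) D" by (auto simp: inj_on_def)
    have "(\<Sum>(a,b)\<in>D. d a) = (\<Sum>(a,b)\<in>(\<lambda>(a,b). (b,a)) ` D. d a)" using im by simp
    also have "\<dots> = (\<Sum>(a,b)\<in>D. d b)" by (subst sum.reindex[OF inj]) (simp add: case_prod_beta comp_def)
    finally show ?thesis by simp
  qed
  have "(\<Sum>(a,b)\<in>D. d a + d b) \<le> (\<Sum>(a,b)\<in>D. card V)"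
    by (rule sum_mono) (use key in auto)
  moreover have "(\<Sum>(a,b)\<in>D. d a + d b) = 2 * (\<Sum>a\<in>V. d a * d a)"
    using s1 s2 by (simp add: sum.distrib case_prod_beta)
  moreover have "(\<Sum>(a,b)\<in>D. card V) = card D * card V" by simp
  ultimately have "2 * (\<Sum>a\<in>V. d a * d a) \<le> card D * card V" by simp
  then have "real (2 * (\<Sum>a\<in>V. d a * d a)) \<le> real (card D * card V)" by (simp only: of_nat_le_iff)
  then have r1: "2 * (\<Sum>a\<in>V. real (d a) ^ 2) \<le> real (card D) * real (card V)"
    by (simp add: power2_eq_square)
  have r2: "real (card D) ^ 2 \<le> (\<Sum>a\<in>V. real (d a) ^ 2) * real (card V)"
    using sum_squared_le_sum_of_squares[of "\<lambda>a. real (d a)" V] cardD by simp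
  have "2 * real (card D) ^ 2 \<le> 2 * (\<Sum>a\<in>V. real (d a) ^ 2) * real (card V)" using r2 by simp
  also have "\<dots> \<le> real (card D) * real (card V) * real (card V)"
    using r1 by (intro mult_right_mono) auto
  finally have "real (card D) * (2 * real (card D)) \<le> real (card D) * (real (card V) * real (card V))"
    by (simp add: power2_eq_square mult.assoc)
  then have "card D = 0 \<or> 2 * real (card D) \<le> real (card V) * real (card V)"
    by (metis mult_le_cancel_left_pos of_nat_0_less_iff neq0_conv)
  then have "card D = 0 \<or> real (2 * card D) \<le> real (card V * card V)" by simp
  then show ?thesis by (auto simp: power2_eq_square simp del: of_nat_mult)
qed



lemma hbound:
  assumes bip: "bipartite_graph adj V W" and n4: "\<not> has_cycle adj 4" and n6: "\<not> has_cycle adj 6"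
  shows "4 * num_edges adj \<le> card V ^ 2 + 4 * card W"
proof -
  note b = bip_facts[OF bip]
  note c4 = bcyc4[OF bip] and c6 = bcyc6[OF bip]
  define c where "c y = (SOME x. adj x y)" for y
  define S where "S = {(y,x). y \<in> W \<and> x \<in> V \<and> adj x y \<and> x \<noteq> c y}"
  have cprop: "adj (c y) y \<and> c y \<in> V" if "y \<in> W" "adj x y" for x y
  proof -
    have "adj (c y) y" unfolding c_def using that(2) by (rule someI)
    then show ?thesis using b(3,6) that(1) by blast
  qed
  have finS: "finite S"
    by (rule finite_subset[of _ "W \<times> V"]) (use b(1,2) in \<open>auto simp: S_def\<close>)
  have "Ed adj V W \<subseteq> (\<lambda>(y,x). (x,y)) ` S \<union> (\<lambda>y. (c y, y)) ` W"
  proof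
    fix p assume "p \<in> Ed adj V W"
    then obtain x y where p: "p = (x,y)" "x \<in> V" "y \<in> W" "adj x y" unfolding Ed_def by blast
    show "p \<in> (\<lambda>(y,x). (x,y)) ` S \<union> (\<lambda>y. (c y, y)) ` W"
    proof (cases "x = c y")
      case True then show ?thesis using p by blast
    next
      case False then have "(y,x) \<in> S" using p unfolding S_def by blast
      then have "(x,y) \<in> (\<lambda>(y,x). (x,y)) ` S" by (rule rev_image_eqI) simp
      then show ?thesis using p by blast
    qed
  qed
  then have "card (Ed adj V W) \<le> card ((\<lambda>(y,x). (x,y)) ` S \<union> (\<lambda>y. (c y, y)) ` W)"
    by (rule card_mono[rotated]) (use finS b(2) in auto)
  also have "\<dots> \<le> card S + card W"
    by (rule order_trans[OF card_Un_le]) (intro add_mono card_image_le finS b(2))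
  finally have e1: "num_edges adj \<le> card S + card W" using num_edges_Ed[OF bip] by simp
  define f1 where "f1 = (\<lambda>(y::'a,x::'a). (c y, x))"
  define f2 where "f2 = (\<lambda>(y::'a,x::'a). (x, c y))"
  define D where "D = f1 ` S \<union> f2 ` S"
  have Smem: "y \<in> W \<and> x \<in> V \<and> adj x y \<and> x \<noteq> c y \<and> adj (c y) y \<and> c y \<in> V" if "(y,x) \<in> S" for x y
  proof -
    have "y \<in> W" "x \<in> V" "adj x y" "x \<noteq> c y" using that unfolding S_def by auto
    then show ?thesis using cprop by blast
  qed
  have inj1: "inj_on f1 S"
  proof (rule inj_onI, clarify)
    fix y x y' x' assume a: "(y,x) \<in> S" "(y',x') \<in> S" "f1 (y,x) = f1 (y',x')"
    then have xx: "x = x'" "c y = c y'" unfolding f1_def by auto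
    show "y = y' \<and> x = x'"
    proof (rule ccontr)
      assume "\<not> (y = y' \<and> x = x')"
      then have "y \<noteq> y'" using xx by blast
      then have "has_cycle adj 4" using Smem[OF a(1)] Smem[OF a(2)] xx
        by (intro c4[of "c y" x y y']) auto
      then show False using n4 by blast
    qed
  qed
  have inj2: "inj_on f2 S"
  proof (rule inj_onI, clarify)
    fix y x y' x' assume a: "(y,x) \<in> S" "(y',x') \<in> S" "f2 (y,x) = f2 (y',x')"
    then have xx: "x = x'" "c y = c y'" unfolding f2_def by auto
    show "y = y' \<and> x = x'"
    proof (rule ccontr)
      assume "\<not> (y = y' \<and> x = x')"
      then have "y \<noteq> y'" using xx by blast
      then have "has_cycle adj 4" using Smem[OF a(1)] Smem[OF a(2)] xx
        by (intro c4[of "c y" x y y']) auto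
      then show False using n4 by blast
    qed
  qed
  have disj: "f1 ` S \<inter> f2 ` S = {}"
  proof (rule ccontr)
    assume "f1 ` S \<inter> f2 ` S \<noteq> {}"
    then obtain p q where pq: "p \<in> S" "q \<in> S" "f1 p = f2 q" by blast
    obtain y x where p: "p = (y,x)" by (cases p)
    obtain y' x' where q: "q = (y',x')" by (cases q)
    have a: "(y,x) \<in> S" "(y',x') \<in> S" using pq p q by auto
    have xx: "c y = x'" "x = c y'" using pq(3) unfolding p q f1_def f2_def by auto
    note m1 = Smem[OF a(1)] and m2 = Smem[OF a(2)]
    have "y \<noteq> y'" using xx m1 by auto
    moreover have "x \<noteq> x'" using xx m2 by auto
    ultimately have "has_cycle adj 4" using m1 m2 xx
      by (intro c4[of x x' y y']) auto
    then show False using n4 by blast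
  qed
  have cardD: "card D = 2 * card S"
    unfolding D_def using card_Un_disjoint[OF finite_imageI[OF finS] finite_imageI[OF finS] disj]
      card_image[OF inj1] card_image[OF inj2] by simp
  have Dmem: "\<exists>y\<in>W. adj p y \<and> adj q y \<and> p \<noteq> q \<and> p \<in> V \<and> q \<in> V \<and> (c y = p \<or> c y = q)" if "(p,q) \<in> D" for p q
  proof -
    from that have "(p,q) \<in> f1 ` S \<or> (p,q) \<in> f2 ` S" unfolding D_def by blast
    then obtain z where z: "z \<in> S" "(p,q) = f1 z \<or> (p,q) = f2 z" by blast
    obtain y x where zz: "z = (y,x)" by (cases z)
    note m = Smem[OF z(1)[unfolded zz]]
    from z(2) show ?thesis
    proof
      assume "(p,q) = f1 z" then have "p = c y" "q = x" by (simp_all add: f1_def zz)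
      then show ?thesis using m by blast
    next
      assume "(p,q) = f2 z" then have "q = c y" "p = x" by (simp_all add: f2_def zz)
      then show ?thesis using m by blast
    qed
  qed
  have subD: "D \<subseteq> V \<times> V" using Dmem by auto
  have symD: "(q,p) \<in> D" if "(p,q) \<in> D" for p q
  proof -
    from that have "(p,q) \<in> f1 ` S \<or> (p,q) \<in> f2 ` S" unfolding D_def by blast
    then show ?thesis
    proof
      assume "(p,q) \<in> f1 ` S" then obtain z where z: "z \<in> S" "(p,q) = f1 z" by blast
      then have "(q,p) = f2 z" by (cases z) (simp add: f1_def f2_def)
      then show ?thesis using z unfolding D_def by blast
    next
      assume "(p,q) \<in> f2 ` S" then obtain z where z: "z \<in> S" "(p,q) = f2 z" by blast
      then have "(q,p) = f1 z" by (cases z) (simp add: f1_def f2_def)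
      then show ?thesis using z unfolding D_def by blast
    qed
  qed
  have triD: False if t: "(a,bb) \<in> D" "(bb,d) \<in> D" "(a,d) \<in> D" for a bb d
  proof -
    obtain y1 where y1: "y1 \<in> W" "adj a y1" "adj bb y1" "a \<noteq> bb" "a \<in> V" "bb \<in> V" "c y1 = a \<or> c y1 = bb"
      using Dmem[OF t(1)] by blast
    obtain y2 where y2: "y2 \<in> W" "adj bb y2" "adj d y2" "bb \<noteq> d" "d \<in> V" "c y2 = bb \<or> c y2 = d"
      using Dmem[OF t(2)] by blast
    obtain y3 where y3: "y3 \<in> W" "adj a y3" "adj d y3" "a \<noteq> d" "c y3 = a \<or> c y3 = d"
      using Dmem[OF t(3)] by blast
    consider "y1 = y2" "y2 = y3" | "y1 = y2" "y2 \<noteq> y3" | "y1 \<noteq> y2" "y2 = y3" | "y1 = y3" "y1 \<noteq> y2"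
      | "y1 \<noteq> y2" "y2 \<noteq> y3" "y1 \<noteq> y3" by blast
    then show False
    proof cases
      case 1 then show ?thesis using y1(4,7) y2(4,6) y3(4,5) by metis
    next
      case 2
      have "has_cycle adj 4" using c4[of a d y1 y3] 2 y1 y2 y3 by simp
      then show ?thesis using n4 by blast
    next
      case 3
      have "has_cycle adj 4" using c4[of a bb y1 y2] 3 y1 y2 y3 by simp
      then show ?thesis using n4 by blast
    next
      case 4
      have "has_cycle adj 4" using c4[of bb d y1 y2] 4 y1 y2 y3 by simp
      then show ?thesis using n4 by blast
    next
      case 5
      have "has_cycle adj 6" using c6[of a bb d y1 y2 y3] 5 y1 y2 y3 by simp
      then show ?thesis using n6 by blast
    qed
  qed
  have "2 * card D \<le> card V ^ 2" by (rule mantel[OF b(1) subD symD triD])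
  then show ?thesis using cardD e1 by linarith
qed



definition deg :: "('a \<Rightarrow> 'a \<Rightarrow> bool) \<Rightarrow> 'a \<Rightarrow> nat" where
  "deg adj z = card {t. adj z t}"

lemma nb_sub:
  assumes "bipartite_graph adj V W" shows "{t. adj z t} \<subseteq> V \<union> W"
proof
  fix t assume "t \<in> {t. adj z t}"
  then have "adj z t" by simp
  then show "t \<in> V \<union> W" using bip_facts(6)[OF assms, of z t] by blast
qed

lemma finite_nb:
  assumes "bipartite_graph adj V W" shows "finite {t. adj z t}"
proof (rule finite_subset[OF nb_sub[OF assms]])
  show "finite (V \<union> W)" using bip_facts(1,2)[OF assms] by simp
qed

lemma count3:
  assumes bip: "bipartite_graph adj V W" and n4: "\<not> has_cycle adj 4" and n6: "\<not> has_cycle adj 6"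
  shows "(\<Sum>(x,y)\<in>Ed adj V W. (deg adj x - 1) * (deg adj y - 1) + 1) \<le> card V * card W"
proof -
  note b = bip_facts[OF bip]
  define E where "E = Ed adj V W"
  define nb where "nb z = {t. adj z t}" for z
  have finb: "finite (nb z)" for z unfolding nb_def by (rule finite_nb[OF bip])
  have finE: "finite E" unfolding E_def by (rule finite_Ed[OF bip])
  define P3 where "P3 = Sigma E (\<lambda>(x1,y1). (nb y1 - {x1}) \<times> (nb x1 - {y1}))"
  have cardP3: "card P3 = (\<Sum>(x1,y1)\<in>E. (deg adj y1 - 1) * (deg adj x1 - 1))"
  proof -
    have "card P3 = (\<Sum>p\<in>E. card ((\<lambda>(x1,y1). (nb y1 - {x1}) \<times> (nb x1 - {y1})) p))"
      unfolding P3_def by (rule card_SigmaI) (use finE finb in auto)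
    also have "\<dots> = (\<Sum>(x1,y1)\<in>E. (deg adj y1 - 1) * (deg adj x1 - 1))"
    proof (rule sum.cong, simp, clarify)
      fix x1 y1 assume "(x1,y1) \<in> E"
      then have "adj x1 y1" unfolding E_def Ed_def by auto
      then have "x1 \<in> nb y1" "y1 \<in> nb x1" using b(4) unfolding nb_def by blast+
      then show "card ((nb y1 - {x1}) \<times> (nb x1 - {y1})) = (deg adj y1 - 1) * (deg adj x1 - 1)"
        by (simp add: card_cartesian_product finb deg_def nb_def[symmetric])
    qed
    finally show ?thesis .
  qed
  define \<pi> where "\<pi> = (\<lambda>(p::'a\<times>'a, q::'a\<times>'a). q)"
  have P3mem: "x1 \<in> V \<and> y1 \<in> W \<and> adj x1 y1 \<and> adj y1 x1 \<and> x \<in> V \<and> adj y1 x \<and> adj x y1 \<and> x \<noteq> x1 \<and> y \<in> W \<and> adj x1 y \<and> adj y x1 \<and> y \<noteq> y1"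
    if "((x1,y1),(x,y)) \<in> P3" for x1 y1 x y
  proof -
    have h: "x1 \<in> V" "y1 \<in> W" "adj x1 y1" "adj y1 x" "x \<noteq> x1" "adj x1 y" "y \<noteq> y1"
      using that unfolding P3_def E_def Ed_def nb_def by auto
    then have "x \<in> V" "y \<in> W" using b(3,6) by blast+
    then show ?thesis using h b(4) by blast
  qed
  have VW: "p \<noteq> q" if "p \<in> V" "q \<in> W" for p q using b(3) that by blast
  have inj: "inj_on \<pi> P3"
  proof (rule inj_onI)
    fix p p' assume pp: "p \<in> P3" "p' \<in> P3" "\<pi> p = \<pi> p'"
    obtain x1 y1 x y where p: "p = ((x1,y1),(x,y))" by (metis prod.exhaust)
    obtain x1' y1' x' y' where p': "p' = ((x1',y1'),(x',y'))" by (metis prod.exhaust)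
    have a: "((x1,y1),(x,y)) \<in> P3" "((x1',y1'),(x',y')) \<in> P3" using pp p p' by auto
    have e: "x' = x" "y' = y" using pp(3) unfolding p p' \<pi>_def by auto
    note m = P3mem[OF a(1)] P3mem[OF a(2)[unfolded e]]
    show "p = p'" unfolding p p'
    proof (rule ccontr)
      assume ne: "\<not> ((x1, y1), x, y) = ((x1', y1'), x', y')"
      consider "y1 = y1'" "x1 \<noteq> x1'" | "x1 = x1'" "y1 \<noteq> y1'" | "x1 \<noteq> x1'" "y1 \<noteq> y1'" using ne e by blast
      then show False
      proof cases
        case 1
        have "has_cycle adj 4" using bcyc4[OF bip, of x1 x1' y y1] 1 m by blast
        then show ?thesis using n4 by blast
      next
        case 2
        have "has_cycle adj 4" using bcyc4[OF bip, of x x1 y1 y1'] 2 m by blast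
        then show ?thesis using n4 by blast
      next
        case 3
        have "has_cycle adj 6" using bcyc6[OF bip, of x x1 x1' y1 y y1'] 3 m by blast
        then show ?thesis using n6 by blast
      qed
    qed
  qed
  have disj: "E \<inter> \<pi> ` P3 = {}"
  proof (rule ccontr)
    assume "E \<inter> \<pi> ` P3 \<noteq> {}"
    then obtain x1 y1 x y where a: "((x1,y1),(x,y)) \<in> P3" "(x,y) \<in> E" unfolding \<pi>_def by force
    note m = P3mem[OF a(1)]
    have "adj x y" using a(2) unfolding E_def Ed_def by auto
    moreover have "x \<in> V" "y \<in> W" using a(2) unfolding E_def Ed_def by auto
    ultimately have "has_cycle adj 4" using bcyc4[OF bip, of x x1 y1 y] m by blast
    then show False using n4 by blast
  qed
  have sub: "E \<union> \<pi> ` P3 \<subseteq> V \<times> W" using P3mem unfolding E_def Ed_def \<pi>_def by force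
  have finP3: "finite P3" unfolding P3_def using finE finb by auto
  have "card E + card P3 = card (E \<union> \<pi> ` P3)"
    using card_Un_disjoint[OF finE finite_imageI[OF finP3] disj] card_image[OF inj] by simp
  also have "\<dots> \<le> card (V \<times> W)" by (rule card_mono[OF _ sub]) (use b(1,2) in auto)
  finally have le: "card E + card P3 \<le> card V * card W" by (simp add: card_cartesian_product)
  have "(\<Sum>(x,y)\<in>E. (deg adj x - 1) * (deg adj y - 1) + 1) = (\<Sum>(x,y)\<in>E. (deg adj y - 1) * (deg adj x - 1) + 1)"
    by (rule sum.cong) (auto simp: mult.commute)
  also have "\<dots> = (\<Sum>(x,y)\<in>E. (deg adj y - 1) * (deg adj x - 1)) + (\<Sum>(x,y)\<in>E. 1)"
    by (simp only: sum.distrib split_def)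
  also have "\<dots> = card P3 + card E" unfolding cardP3 by simp
  finally have "(\<Sum>(x,y)\<in>E. (deg adj x - 1) * (deg adj y - 1) + 1) = card P3 + card E" .
  then show ?thesis using le unfolding E_def by simp
qed

lemma amgm3:
  fixes p q r :: real
  assumes "p > 0" "q > 0" "r > 0" "p * q * r = 1"
  shows "3 \<le> p + q + r"
proof -
  define \<alpha> where "\<alpha> = root 3 p"
  define \<beta> where "\<beta> = root 3 q"
  define \<gamma> where "\<gamma> = root 3 r"
  have pos: "\<alpha> > 0" "\<beta> > 0" "\<gamma> > 0" using assms unfolding \<alpha>_def \<beta>_def \<gamma>_def by auto
  have cub: "\<alpha> ^ 3 = p" "\<beta> ^ 3 = q" "\<gamma> ^ 3 = r" using assms unfolding \<alpha>_def \<beta>_def \<gamma>_def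
    by (auto simp: real_root_pow_pos2)
  have "(\<alpha> * \<beta> * \<gamma>) ^ 3 = 1" using cub assms(4) by (simp add: power_mult_distrib)
  then have abc: "\<alpha> * \<beta> * \<gamma> = 1" using pos
    by (intro power_eq_imp_eq_base[of _ 3 1]) auto
  have "\<alpha>^3 + \<beta>^3 + \<gamma>^3 - 3 * (\<alpha> * \<beta> * \<gamma>) = (\<alpha> + \<beta> + \<gamma>) * ((\<alpha> - \<beta>)^2 + (\<beta> - \<gamma>)^2 + (\<gamma> - \<alpha>)^2) / 2"
    by (simp add: power2_eq_square power3_eq_cube algebra_simps)
  also have "\<dots> \<ge> 0" using pos by (intro divide_nonneg_pos mult_nonneg_nonneg) auto
  finally show ?thesis using cub abc by simp
qed



lemma holder3:
  fixes a b c :: "'b \<Rightarrow> real"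
  assumes fin: "finite A" and pos: "\<And>i. i \<in> A \<Longrightarrow> a i > 0 \<and> b i > 0 \<and> c i > 0"
    and prod: "\<And>i. i \<in> A \<Longrightarrow> a i * b i * c i = 1"
  shows "real (card A) ^ 3 \<le> (\<Sum>i\<in>A. a i) * (\<Sum>i\<in>A. b i) * (\<Sum>i\<in>A. c i)"
proof (cases "A = {}")
  case True then show ?thesis by simp
next
  case False
  define Sa where "Sa = (\<Sum>i\<in>A. a i)"
  define Sb where "Sb = (\<Sum>i\<in>A. b i)"
  define Sc where "Sc = (\<Sum>i\<in>A. c i)"
  have pa: "Sa > 0" unfolding Sa_def by (rule sum_pos[OF fin False]) (use pos in blast)
  have pb: "Sb > 0" unfolding Sb_def by (rule sum_pos[OF fin False]) (use pos in blast)
  have pc: "Sc > 0" unfolding Sc_def by (rule sum_pos[OF fin False]) (use pos in blast)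
  define K where "K = root 3 (Sa * Sb * Sc)"
  have SS: "Sa * Sb * Sc > 0" using pa pb pc by simp
  have K: "K > 0" "K ^ 3 = Sa * Sb * Sc" unfolding K_def using SS by (auto simp: real_root_pow_pos2)
  have t: "3 \<le> a i * K / Sa + b i * K / Sb + c i * K / Sc" if i: "i \<in> A" for i
  proof (rule amgm3)
    show "a i * K / Sa > 0" "b i * K / Sb > 0" "c i * K / Sc > 0" using pos[OF i] K pa pb pc by auto
    have "a i * K / Sa * (b i * K / Sb) * (c i * K / Sc) = (a i * b i * c i) * K ^ 3 / (Sa * Sb * Sc)"
      by (simp add: power3_eq_cube field_simps)
    also have "\<dots> = 1" using prod[OF i] K(2) SS pa pb pc by simp
    finally show "a i * K / Sa * (b i * K / Sb) * (c i * K / Sc) = 1" .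
  qed
  have "(\<Sum>i\<in>A. 3) \<le> (\<Sum>i\<in>A. a i * K / Sa + b i * K / Sb + c i * K / Sc)"
    by (rule sum_mono) (rule t)
  also have "\<dots> = (\<Sum>i\<in>A. a i) * K / Sa + (\<Sum>i\<in>A. b i) * K / Sb + (\<Sum>i\<in>A. c i) * K / Sc"
    by (simp add: sum.distrib sum_divide_distrib[symmetric] sum_distrib_right[symmetric])
  also have "\<dots> = 3 * K" unfolding Sa_def[symmetric] Sb_def[symmetric] Sc_def[symmetric]
    using pa pb pc by simp
  finally have "real (card A) \<le> K" by simp
  then have "real (card A) ^ 3 \<le> K ^ 3" by (rule power_mono) simp
  then show ?thesis using K(2) unfolding Sa_def Sb_def Sc_def by simp
qed

lemma nat_deg_ineq:
  fixes dx dy :: nat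
  assumes "2 \<le> dx" "2 \<le> dy"
  shows "dx * dy \<le> 2 * ((dx - 1) * (dy - 1) + 1)"
proof -
  obtain a where a: "dx = 2 + a" using assms(1) le_Suc_ex by blast
  obtain b where b: "dy = 2 + b" using assms(2) le_Suc_ex by blast
  show ?thesis unfolding a b by (simp add: algebra_simps)
qed

lemma Ed_sigma:
  assumes bip: "bipartite_graph adj V W"
  shows "Ed adj V W = Sigma V (\<lambda>x. {t. adj x t})"
proof -
  note b = bip_facts[OF bip]
  have "t \<in> W" if "x \<in> V" "adj x t" for x t using b(3) b(6)[OF that(2)] that(1) by blast
  then show ?thesis unfolding Ed_def by auto
qed

lemma sum_inv_deg:
  assumes bip: "bipartite_graph adj V W"
  shows "(\<Sum>p\<in>Ed adj V W. 1 / real (deg adj (fst p))) \<le> real (card V)"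
proof -
  note b = bip_facts[OF bip]
  have "(\<Sum>p\<in>Ed adj V W. 1 / real (deg adj (fst p))) = (\<Sum>x\<in>V. \<Sum>t\<in>{t. adj x t}. 1 / real (deg adj x))"
    unfolding Ed_sigma[OF bip] by (subst sum.Sigma) (use b(1) finite_nb[OF bip] in \<open>auto simp: split_def\<close>)
  also have "\<dots> \<le> (\<Sum>x\<in>V. 1)"
  proof (rule sum_mono)
    fix x assume "x \<in> V"
    show "(\<Sum>t\<in>{t. adj x t}. 1 / real (deg adj x)) \<le> 1"
      by (cases "deg adj x = 0") (simp_all add: deg_def)
  qed
  finally show ?thesis by simp
qed

lemma Ed_swap:
  assumes bip: "bipartite_graph adj V W"
  shows "Ed adj W V = (\<lambda>p. (snd p, fst p)) ` Ed adj V W"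
proof -
  note b = bip_facts[OF bip]
  show ?thesis unfolding Ed_def
  proof (rule set_eqI, rule iffI)
    fix p assume "p \<in> {(x, y). x \<in> W \<and> y \<in> V \<and> adj x y}"
    then obtain x y where p: "p = (x,y)" "x \<in> W" "y \<in> V" "adj x y" by blast
    then have "adj y x" using b(4) by blast
    then have "(y,x) \<in> {(x, y). x \<in> V \<and> y \<in> W \<and> adj x y}" using p by blast
    then show "p \<in> (\<lambda>p. (snd p, fst p)) ` {(x, y). x \<in> V \<and> y \<in> W \<and> adj x y}"
      using p(1) by (intro rev_image_eqI) auto
  next
    fix p assume "p \<in> (\<lambda>p. (snd p, fst p)) ` {(x, y). x \<in> V \<and> y \<in> W \<and> adj x y}"
    then obtain x y where p: "p = (y,x)" "x \<in> V" "y \<in> W" "adj x y" by auto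
    then have "adj y x" using b(4) by blast
    then show "p \<in> {(x, y). x \<in> W \<and> y \<in> V \<and> adj x y}" using p by blast
  qed
qed

lemma sum_inv_deg2:
  assumes bip: "bipartite_graph adj V W"
  shows "(\<Sum>p\<in>Ed adj V W. 1 / real (deg adj (snd p))) \<le> real (card W)"
proof -
  have inj: "inj_on (\<lambda>p. (snd p, fst p)) (Ed adj V W)" by (auto simp: inj_on_def)
  have "(\<Sum>p\<in>Ed adj W V. 1 / real (deg adj (fst p))) = (\<Sum>p\<in>Ed adj V W. 1 / real (deg adj (snd p)))"
    unfolding Ed_swap[OF bip] by (subst sum.reindex[OF inj]) (simp add: comp_def)
  then show ?thesis using sum_inv_deg[OF bip_swap[OF bip]] by simp
qed

lemma noleaf:
  assumes bip: "bipartite_graph adj V W" and n4: "\<not> has_cycle adj 4" and n6: "\<not> has_cycle adj 6"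
    and nl: "\<And>z. z \<in> V \<union> W \<Longrightarrow> deg adj z \<noteq> 1"
  shows "real (num_edges adj) ^ 3 \<le> 2 * (real (card V) * real (card W)) ^ 2"
proof -
  note b = bip_facts[OF bip]
  define E where "E = Ed adj V W"
  have finE: "finite E" unfolding E_def by (rule finite_Ed[OF bip])
  have dge: "2 \<le> deg adj z" if "z \<in> V \<union> W" "adj z t" for z t
  proof -
    have "t \<in> {t. adj z t}" using that(2) by simp
    then have "deg adj z \<noteq> 0" unfolding deg_def using finite_nb[OF bip, of z] by auto
    then show ?thesis using nl[OF that(1)] by linarith
  qed
  have dE: "2 \<le> deg adj (fst p) \<and> 2 \<le> deg adj (snd p)" if pE: "p \<in> E" for p
  proof -
    obtain x y where p: "p = (x,y)" "x \<in> V" "y \<in> W" "adj x y" using pE unfolding E_def Ed_def by blast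
    then have "adj y x" using b(4) by blast
    then show ?thesis using dge[of x y] dge[of y x] p by auto
  qed
  define fa :: "'a \<times> 'a \<Rightarrow> real" where "fa p = real (deg adj (fst p)) * real (deg adj (snd p))" for p
  define fb :: "'a \<times> 'a \<Rightarrow> real" where "fb p = 1 / real (deg adj (fst p))" for p
  define fc :: "'a \<times> 'a \<Rightarrow> real" where "fc p = 1 / real (deg adj (snd p))" for p
  have H: "real (card E) ^ 3 \<le> (\<Sum>p\<in>E. fa p) * (\<Sum>p\<in>E. fb p) * (\<Sum>p\<in>E. fc p)"
  proof (rule holder3[OF finE])
    fix p assume "p \<in> E"
    then have "2 \<le> deg adj (fst p)" "2 \<le> deg adj (snd p)" using dE by auto
    then show "fa p > 0 \<and> fb p > 0 \<and> fc p > 0" "fa p * fb p * fc p = 1"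
      unfolding fa_def fb_def fc_def by auto
  qed
  define g :: "'a \<times> 'a \<Rightarrow> nat" where "g p = (deg adj (fst p) - 1) * (deg adj (snd p) - 1) + 1" for p
  have Sa: "(\<Sum>p\<in>E. fa p) \<le> 2 * (real (card V) * real (card W))"
  proof -
    have "(\<Sum>p\<in>E. fa p) \<le> (\<Sum>p\<in>E. 2 * real (g p))"
    proof (rule sum_mono)
      fix p assume "p \<in> E"
      then have "deg adj (fst p) * deg adj (snd p) \<le> 2 * g p"
        unfolding g_def using dE by (intro nat_deg_ineq) auto
      then have "real (deg adj (fst p) * deg adj (snd p)) \<le> real (2 * g p)"
        by (simp only: of_nat_le_iff)
      then show "fa p \<le> 2 * real (g p)"
        unfolding fa_def by (simp only: of_nat_mult of_nat_numeral)
    qed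
    also have "\<dots> = 2 * real (\<Sum>p\<in>E. g p)"
      by (simp only: sum_distrib_left[symmetric] of_nat_sum)
    also have "(\<Sum>p\<in>E. g p) \<le> card V * card W"
      using count3[OF bip n4 n6] unfolding E_def g_def by (simp only: split_def)
    then have "real (\<Sum>p\<in>E. g p) \<le> real (card V * card W)" by (simp only: of_nat_le_iff)
    then have "2 * real (\<Sum>p\<in>E. g p) \<le> 2 * (real (card V) * real (card W))" by simp
    finally show ?thesis .
  qed
  have Sb: "(\<Sum>p\<in>E. fb p) \<le> real (card V)" unfolding E_def fb_def by (rule sum_inv_deg[OF bip])
  have Sc: "(\<Sum>p\<in>E. fc p) \<le> real (card W)" unfolding E_def fc_def by (rule sum_inv_deg2[OF bip])
  have nn: "0 \<le> (\<Sum>p\<in>E. fb p)" "0 \<le> (\<Sum>p\<in>E. fc p)" unfolding fb_def fc_def by (auto intro: sum_nonneg)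
  have "(\<Sum>p\<in>E. fa p) * (\<Sum>p\<in>E. fb p) * (\<Sum>p\<in>E. fc p) \<le> (2 * (real (card V) * real (card W))) * real (card V) * real (card W)"
    by (intro mult_mono Sa Sb Sc nn mult_nonneg_nonneg) auto
  then have "real (card E) ^ 3 \<le> 2 * (real (card V) * real (card W)) ^ 2"
    using H by (simp add: power2_eq_square algebra_simps)
  then show ?thesis using num_edges_Ed[OF bip] unfolding E_def by simp
qed



definition Fb :: "nat \<Rightarrow> nat \<Rightarrow> real" where
  "Fb v w = 2 powr (1/3) * (real v * real w) powr (2/3)"

definition R1 :: "nat \<Rightarrow> nat \<Rightarrow> bool" where
  "R1 v w \<longleftrightarrow> 4 * max v w \<le> (min v w) ^ 2"

lemma Fb_sym: "Fb v w = Fb w v" unfolding Fb_def by (simp add: mult.commute)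
lemma R1_sym: "R1 v w = R1 w v" unfolding R1_def by (simp add: max.commute min.commute)

lemma Fb_nonneg: "0 \<le> Fb v w" unfolding Fb_def by simp

lemma Fb_cube: "Fb v w ^ 3 = 2 * (real v * real w) ^ 2"
proof (cases "real v * real w = 0")
  case True
  then have "(real v * real w) powr (2/3) = 0" by simp
  show ?thesis unfolding Fb_def by (simp only: True) simp
next
  case False
  have a: "(2 powr (1/3) :: real) ^ 3 = 2" by (subst powr_power) simp_all
  have b: "((real v * real w) powr (2/3)) ^ 3 = (real v * real w) ^ 2"
  proof -
    have "((real v * real w) powr (2/3)) ^ 3 = (real v * real w) powr (of_nat 3 * (2/3))"
      by (rule powr_power) (use False in simp)
    also have "\<dots> = (real v * real w) powr 2" by simp
    also have "\<dots> = (real v * real w) ^ 2" by simp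
    finally show ?thesis .
  qed
  show ?thesis unfolding Fb_def power_mult_distrib a b ..
qed

lemma le_Fb:
  assumes "0 \<le> x" "x ^ 3 \<le> 2 * (real v * real w) ^ 2"
  shows "x \<le> Fb v w"
proof (rule power_le_imp_le_base[of _ 2])
  show "x ^ Suc 2 \<le> Fb v w ^ Suc 2" using assms(2) Fb_cube[of v w] by (simp add: numeral_3_eq_3)
  show "0 \<le> Fb v w" by (rule Fb_nonneg)
qed

lemma R1_16:
  assumes "R1 v w" "1 \<le> v"
  shows "27 * v \<le> 16 * w ^ 2"
proof (cases "v \<le> w")
  case True
  then have h: "4 * w \<le> v ^ 2" using assms(1) unfolding R1_def by (simp add: max_def min_def)
  have "4 * v \<le> v * v" using h True unfolding power2_eq_square by linarith
  then have "4 \<le> v" using mult_le_cancel2[of 4 v v] assms(2) by simp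
  then have "27 * v \<le> 16 * (v * v)" by simp
  also have "\<dots> \<le> 16 * (w * w)" using True by (simp add: mult_le_mono)
  finally show ?thesis by (simp add: power2_eq_square)
next
  case False
  then have "4 * v \<le> w ^ 2" using assms(1) unfolding R1_def by (simp add: max_def min_def)
  then show ?thesis by linarith
qed

lemma ineq_a:
  assumes R: "R1 v w" and v1: "1 \<le> v"
  shows "Fb (v - 1) w + 1 \<le> Fb v w"
proof -
  define c where "c = 2 powr (1/3) * real w powr (2/3)"
  define \<alpha> where "\<alpha> = real v powr (1/3)"
  define \<beta> where "\<beta> = real (v - 1) powr (1/3)"
  have sq: "x powr (2/3) = (x powr (1/3)) ^ 2" if "0 < x" for x :: real
    using that by (subst powr_power) simp_all
  have cube: "(x powr (1/3)) ^ 3 = x" if "0 \<le> x" for x :: real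
  proof (cases "x = 0")
    case True then show ?thesis by simp
  next
    case False then show ?thesis using that by (subst powr_power) simp_all
  qed
  have sq0: "x powr (2/3) = (x powr (1/3)) ^ 2" if "0 \<le> x" for x :: real
    using sq[of x] that by (cases "x = 0") auto
  have Fv: "Fb v w = c * \<alpha> ^ 2" unfolding Fb_def c_def \<alpha>_def
    by (simp add: powr_mult sq0)
  have Fv1: "Fb (v - 1) w = c * \<beta> ^ 2" unfolding Fb_def c_def \<beta>_def
    by (simp add: powr_mult sq0)
  have a3: "\<alpha> ^ 3 = real v" unfolding \<alpha>_def by (rule cube) simp
  have b3: "\<beta> ^ 3 = real v - 1" unfolding \<beta>_def using v1 by (subst cube) auto
  have c3: "c ^ 3 = 2 * real w ^ 2" using Fb_cube[of 1 w] unfolding Fb_def c_def by simp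
  have a0: "0 \<le> \<alpha>" "0 \<le> \<beta>" "0 \<le> c" unfolding \<alpha>_def \<beta>_def c_def by simp_all
  have ba: "\<beta> \<le> \<alpha>" unfolding \<alpha>_def \<beta>_def by (rule powr_mono2) auto
  have c32: "3/2 * \<alpha> \<le> c"
  proof (rule power_le_imp_le_base[of _ 2])
    have "(3/2 * \<alpha>) ^ Suc 2 = (3/2 * \<alpha>) ^ 3" by (simp add: numeral_3_eq_3)
    also have "\<dots> = (3/2) ^ 3 * \<alpha> ^ 3" by (rule power_mult_distrib)
    also have "\<dots> = 27/8 * real v" using a3 by (simp add: power_divide)
    finally have "(3/2 * \<alpha>) ^ Suc 2 = 27/8 * real v" .
    also have "\<dots> \<le> 2 * real w ^ 2"
    proof -
      have "real (27 * v) \<le> real (16 * w ^ 2)" using R1_16[OF R v1] by (simp only: of_nat_le_iff)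
      then show ?thesis by simp
    qed
    also have "\<dots> = c ^ Suc 2" using c3 by (simp add: numeral_3_eq_3[symmetric])
    finally show "(3/2 * \<alpha>) ^ Suc 2 \<le> c ^ Suc 2" .
    show "0 \<le> c" by (rule a0)
  qed
  have key: "\<alpha>^2 + \<alpha>*\<beta> + \<beta>^2 \<le> 3/2 * \<alpha> * (\<alpha> + \<beta>)"
  proof -
    have "3/2 * \<alpha> * (\<alpha> + \<beta>) - (\<alpha>^2 + \<alpha>*\<beta> + \<beta>^2) = (\<alpha> - \<beta>) * (\<alpha>/2 + \<beta>)"
      by (simp add: field_simps power2_eq_square)
    also have "\<dots> \<ge> 0" using ba a0 by (intro mult_nonneg_nonneg) auto
    finally show ?thesis by simp
  qed
  have "1 = \<alpha> ^ 3 - \<beta> ^ 3" using a3 b3 by simp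
  also have "\<dots> = (\<alpha> - \<beta>) * (\<alpha>^2 + \<alpha>*\<beta> + \<beta>^2)"
    by (simp add: algebra_simps power2_eq_square power3_eq_cube)
  also have "\<dots> \<le> (\<alpha> - \<beta>) * (3/2 * \<alpha> * (\<alpha> + \<beta>))"
    using key ba by (intro mult_left_mono) auto
  also have "\<dots> \<le> (\<alpha> - \<beta>) * (c * (\<alpha> + \<beta>))"
    using c32 ba a0 by (intro mult_left_mono mult_right_mono) auto
  also have "\<dots> = c * \<alpha> ^ 2 - c * \<beta> ^ 2" by (simp add: algebra_simps power2_eq_square)
  finally show ?thesis using Fv Fv1 by simp
qed

lemma ineq_b:
  assumes R: "R1 v w" and nR: "\<not> R1 (v - 1) w" and v1: "1 \<le> v"
    and e: "4 * e \<le> (v - 1) ^ 2 + 4 * w"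
  shows "real e + 1 \<le> Fb v w"
proof (cases "v \<le> w")
  case False
  then have "4 * v \<le> w ^ 2" using R unfolding R1_def by (simp add: max_def min_def)
  moreover have "w \<le> v - 1" using False by simp
  ultimately have "4 * (v - 1) \<le> w ^ 2" by linarith
  then have "R1 (v - 1) w" using \<open>w \<le> v - 1\<close> unfolding R1_def by (simp add: max_def min_def)
  then show ?thesis using nR by blast
next
  case True
  then have h: "4 * w \<le> v ^ 2" using R unfolding R1_def by (simp add: max_def min_def)
  have "v - 1 < w" using True v1 by simp
  then have "(v - 1) ^ 2 < 4 * w" using nR unfolding R1_def by (simp add: max_def min_def)
  then have "e + 1 \<le> 2 * w" using e by linarith
  then have le: "real e + 1 \<le> real (2 * w)" by (simp only: of_nat_le_iff[symmetric] of_nat_add of_nat_1)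
  have "real (2 * w) \<le> Fb v w"
  proof (rule le_Fb)
    have "real (4 * w) \<le> real (v ^ 2)" using h by (simp only: of_nat_le_iff)
    then have h': "4 * real w \<le> real v ^ 2" by simp
    have "real (2 * w) ^ 3 = 2 * (4 * real w) * real w ^ 2" by (simp add: power3_eq_cube power2_eq_square)
    also have "\<dots> \<le> 2 * real v ^ 2 * real w ^ 2" using h' by (intro mult_right_mono) auto
    also have "\<dots> = 2 * (real v * real w) ^ 2" by (simp add: power_mult_distrib)
    finally show "real (2 * w) ^ 3 \<le> 2 * (real v * real w) ^ 2" .
  qed simp
  then show ?thesis using le by linarith
qed



lemma has_cycle_mono:
  assumes "has_cycle adj' k" "\<And>a b. adj' a b \<Longrightarrow> adj a b"
  shows "has_cycle adj k"
  using assms unfolding has_cycle_def by blast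

lemma leaf_remove:
  assumes bip: "bipartite_graph adj V W" and z: "z \<in> V" and dz: "deg adj z = 1"
  shows "bipartite_graph (\<lambda>a b. adj a b \<and> a \<noteq> z \<and> b \<noteq> z) (V - {z}) W"
    "num_edges adj = Suc (num_edges (\<lambda>a b. adj a b \<and> a \<noteq> z \<and> b \<noteq> z))"
proof -
  note b = bip_facts[OF bip]
  define adj' where "adj' = (\<lambda>a b. adj a b \<and> a \<noteq> z \<and> b \<noteq> z)"
  show bip': "bipartite_graph (\<lambda>a b. adj a b \<and> a \<noteq> z \<and> b \<noteq> z) (V - {z}) W"
    using b unfolding bipartite_graph_def by blast
  obtain y0 where y0: "{t. adj z t} = {y0}" using dz unfolding deg_def by (auto simp: card_1_singleton_iff)
  then have azy: "adj z y0" by blast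
  have y0W: "y0 \<in> W" using b(3) b(6)[OF azy] z by blast
  have "Ed (\<lambda>a b. adj a b \<and> a \<noteq> z \<and> b \<noteq> z) (V - {z}) W = Ed adj V W - {(z,y0)}"
  proof (rule set_eqI, rule iffI)
    fix p assume "p \<in> Ed (\<lambda>a b. adj a b \<and> a \<noteq> z \<and> b \<noteq> z) (V - {z}) W"
    then show "p \<in> Ed adj V W - {(z,y0)}" unfolding Ed_def by auto
  next
    fix p assume p: "p \<in> Ed adj V W - {(z,y0)}"
    then obtain x y where xy: "p = (x,y)" "x \<in> V" "y \<in> W" "adj x y" unfolding Ed_def by blast
    have "x \<noteq> z"
    proof
      assume "x = z" then have "y \<in> {t. adj z t}" using xy by simp
      then have "y = y0" using y0 by blast
      then show False using p xy \<open>x = z\<close> by blast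
    qed
    moreover have "y \<noteq> z" using xy z b(3) by blast
    ultimately show "p \<in> Ed (\<lambda>a b. adj a b \<and> a \<noteq> z \<and> b \<noteq> z) (V - {z}) W"
      using xy unfolding Ed_def by blast
  qed
  moreover have "(z,y0) \<in> Ed adj V W" using z y0W azy unfolding Ed_def by blast
  ultimately have "card (Ed adj V W) = Suc (card (Ed (\<lambda>a b. adj a b \<and> a \<noteq> z \<and> b \<noteq> z) (V - {z}) W))"
    using card_Suc_Diff1[OF finite_Ed[OF bip], of "(z,y0)"] by simp
  then show "num_edges adj = Suc (num_edges (\<lambda>a b. adj a b \<and> a \<noteq> z \<and> b \<noteq> z))"
    using num_edges_Ed[OF bip] num_edges_Ed[OF bip'] by simp
qed

lemma leaf_step:
  fixes adj :: "'a \<Rightarrow> 'a \<Rightarrow> bool"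
  assumes IH: "\<And>adj' (V'::'a set) W'. card V' + card W' < card V + card W \<Longrightarrow> bipartite_graph adj' V' W'
      \<Longrightarrow> \<not> has_cycle adj' 4 \<Longrightarrow> \<not> has_cycle adj' 6 \<Longrightarrow> R1 (card V') (card W')
      \<Longrightarrow> real (num_edges adj') \<le> Fb (card V') (card W')"
    and bip: "bipartite_graph adj V W" and n4: "\<not> has_cycle adj 4" and n6: "\<not> has_cycle adj 6"
    and R: "R1 (card V) (card W)" and z: "z \<in> V" and dz: "deg adj z = 1"
  shows "real (num_edges adj) \<le> Fb (card V) (card W)"
proof -
  note b = bip_facts[OF bip]
  define adj' where "adj' = (\<lambda>a b. adj a b \<and> a \<noteq> z \<and> b \<noteq> z)"
  have bip': "bipartite_graph adj' (V - {z}) W" unfolding adj'_def by (rule leaf_remove(1)[OF bip z dz])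
  have ne: "num_edges adj = Suc (num_edges adj')" unfolding adj'_def by (rule leaf_remove(2)[OF bip z dz])
  have sub: "adj' a b \<Longrightarrow> adj a b" for a b unfolding adj'_def by blast
  have n4': "\<not> has_cycle adj' 4" using n4 has_cycle_mono[of adj' 4 adj] sub by blast
  have n6': "\<not> has_cycle adj' 6" using n6 has_cycle_mono[of adj' 6 adj] sub by blast
  have v1: "1 \<le> card V" using z b(1) by (simp add: Suc_le_eq card_gt_0_iff) blast
  have cV: "card (V - {z}) = card V - 1" using z b(1) by simp
  have lt: "card (V - {z}) + card W < card V + card W" using cV v1 by simp
  show ?thesis
  proof (cases "R1 (card V - 1) (card W)")
    case True
    have "real (num_edges adj') \<le> Fb (card V - 1) (card W)"
      using IH[OF lt bip' n4' n6'] True cV by simp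
    then show ?thesis using ineq_a[OF R v1] ne by simp
  next
    case False
    have "4 * num_edges adj' \<le> (card V - 1) ^ 2 + 4 * card W" using hbound[OF bip' n4' n6'] cV by simp
    then have "real (num_edges adj') + 1 \<le> Fb (card V) (card W)" by (rule ineq_b[OF R False v1])
    then show ?thesis using ne by simp
  qed
qed

lemma mainR1:
  fixes adj :: "'a \<Rightarrow> 'a \<Rightarrow> bool"
  shows "bipartite_graph adj V W \<Longrightarrow> \<not> has_cycle adj 4 \<Longrightarrow> \<not> has_cycle adj 6 \<Longrightarrow> R1 (card V) (card W)
    \<Longrightarrow> real (num_edges adj) \<le> Fb (card V) (card W)"
proof (induction "card V + card W" arbitrary: adj V W rule: less_induct)
  case less
  note bip = less.prems(1) and n4 = less.prems(2) and n6 = less.prems(3) and R = less.prems(4)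
  consider (a) "\<exists>z\<in>V. deg adj z = 1" | (b) "\<exists>z\<in>W. deg adj z = 1" | (c) "\<And>z. z \<in> V \<union> W \<Longrightarrow> deg adj z \<noteq> 1"
    by blast
  then show ?case
  proof cases
    case a
    then obtain z where z: "z \<in> V" "deg adj z = 1" by blast
    show ?thesis by (rule leaf_step[OF less.hyps bip n4 n6 R z]) auto
  next
    case b
    then obtain z where z: "z \<in> W" "deg adj z = 1" by blast
    have "real (num_edges adj) \<le> Fb (card W) (card V)"
    proof (rule leaf_step[OF _ bip_swap[OF bip] n4 n6 _ z])
      show "R1 (card W) (card V)" using R R1_sym by blast
      fix adj' :: "'a \<Rightarrow> 'a \<Rightarrow> bool" and V' W'
      assume "card V' + card W' < card W + card V" "bipartite_graph adj' V' W'" "\<not> has_cycle adj' 4"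
        "\<not> has_cycle adj' 6" "R1 (card V') (card W')"
      then show "real (num_edges adj') \<le> Fb (card V') (card W')"
        using less.hyps[of V' W' adj'] by (simp add: add.commute)
    qed
    then show ?thesis using Fb_sym by simp
  next
    case c
    show ?thesis by (rule le_Fb) (use noleaf[OF bip n4 n6 c] in auto)
  qed
qed

lemma floor_q: "\<lfloor>real m ^ 2 / 4\<rfloor> = int (m ^ 2 div 4)"
  using floor_divide_of_nat_eq[of "m ^ 2" 4] by simp

lemma div4_iff: "(M::nat) \<le> k div 4 \<longleftrightarrow> 4 * M \<le> k" by presburger

lemma part1:
  fixes adj :: "'a \<Rightarrow> 'a \<Rightarrow> bool"
  assumes bip: "bipartite_graph adj V W" and n4: "\<not> has_cycle adj 4" and n6: "\<not> has_cycle adj 6"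
  shows "real (num_edges adj) \<le>
           (if real (max (card V) (card W)) \<le> of_int \<lfloor>real (min (card V) (card W)) ^ 2 / 4\<rfloor>
            then 2 powr (1/3) * (real (card V) * real (card W)) powr (2/3)
            else of_int \<lfloor>real (min (card V) (card W)) ^ 2 / 4\<rfloor> + real (max (card V) (card W)))"
proof -
  define m where "m = min (card V) (card W)"
  define M where "M = max (card V) (card W)"
  have cond: "(real M \<le> of_int \<lfloor>real m ^ 2 / 4\<rfloor>) \<longleftrightarrow> R1 (card V) (card W)"
    unfolding floor_q R1_def m_def M_def by (simp add: div4_iff)
  have hb: "4 * num_edges adj \<le> m ^ 2 + 4 * M"
  proof (cases "card V \<le> card W")
    case True then show ?thesis using hbound[OF bip n4 n6] unfolding m_def M_def by simp
  next
    case False then show ?thesis using hbound[OF bip_swap[OF bip] n4 n6] unfolding m_def M_def by simp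
  qed
  then have "num_edges adj \<le> m ^ 2 div 4 + M" by presburger
  then have hb': "real (num_edges adj) \<le> real (m ^ 2 div 4) + real M"
    by (simp only: of_nat_le_iff[symmetric] of_nat_add)
  show ?thesis
    unfolding m_def[symmetric] M_def[symmetric]
  proof (cases "R1 (card V) (card W)")
    case True
    then show "real (num_edges adj) \<le> (if real M \<le> of_int \<lfloor>real m ^ 2 / 4\<rfloor>
            then 2 powr (1/3) * (real (card V) * real (card W)) powr (2/3)
            else of_int \<lfloor>real m ^ 2 / 4\<rfloor> + real M)"
      using mainR1[OF bip n4 n6 True] cond unfolding Fb_def by simp
  next
    case False
    then show "real (num_edges adj) \<le> (if real M \<le> of_int \<lfloor>real m ^ 2 / 4\<rfloor>
            then 2 powr (1/3) * (real (card V) * real (card W)) powr (2/3)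
            else of_int \<lfloor>real m ^ 2 / 4\<rfloor> + real M)"
      using hb' cond unfolding floor_q by simp
  qed
qed



lemma ch_eq: "nat \<lceil>real v / 2\<rceil> = (v + 1) div 2"
proof -
  have "\<lceil>real v / 2\<rceil> = int ((v + 1) div 2)"
  proof (rule ceiling_unique)
    show "real_of_int (int ((v + 1) div 2)) - 1 < real v / 2"
      by (cases "even v") (auto elim!: evenE oddE simp: field_simps)
    show "real v / 2 \<le> real_of_int (int ((v + 1) div 2))"
      by (cases "even v") (auto elim!: evenE oddE simp: field_simps)
  qed
  then show ?thesis by simp
qed

lemma floorv: "\<lfloor>real v ^ 2 / 4\<rfloor> = int (v ^ 2 div 4)"
  by (rule floor_q)

lemma prod_ch: "(((v::nat) + 1) div 2) * (v - (v + 1) div 2) = v ^ 2 div 4"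
proof (cases "even v")
  case True then obtain k where "v = 2 * k" by blast
  then show ?thesis by (simp add: power2_eq_square)
next
  case False then obtain k where k: "v = 2 * k + 1" by (blast elim: oddE)
  have "(2 * k + 1) ^ 2 = 4 * (k * k + k) + 1" by (simp add: power2_eq_square algebra_simps)
  then have "(2 * k + 1) ^ 2 div 4 = k * k + k" by simp
  moreover have "(2 * k + 1 + 1) div 2 = k + 1" by simp
  ultimately show ?thesis using k by (simp add: algebra_simps)
qed

lemma n_extra_eq:
  assumes "v ^ 2 div 4 < w"
  shows "n_extra v w = w - v ^ 2 div 4"
proof -
  have "\<lceil>real w - real v ^ 2 / 4\<rceil> = \<lceil>- (real v ^ 2 / 4) + real_of_int (int w)\<rceil>" by simp
  also have "\<dots> = - \<lfloor>real v ^ 2 / 4\<rfloor> + int w" by (simp only: ceiling_add_of_int ceiling_minus)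
  also have "\<dots> = int w - int (v ^ 2 div 4)" unfolding floorv by simp
  finally show ?thesis unfolding n_extra_def using assms by simp
qed

lemma cadj_sym: "cadj v w g x y = cadj v w g y x"
  unfolding cadj_def by blast

definition isL :: "cvert \<Rightarrow> bool" where "isL x \<longleftrightarrow> (\<exists>i. x = L i)"
definition sig :: "nat \<Rightarrow> cvert \<Rightarrow> bool" where "sig c x = (case x of L i \<Rightarrow> i < c | _ \<Rightarrow> False)"

lemma cedge_cases:
  "cedge v w g x y \<Longrightarrow> (\<exists>i a b. x = L i \<and> y = P a b \<and> a < (v+1) div 2 \<and> (v+1) div 2 \<le> b \<and> b < v \<and> (i = a \<or> i = b))
     \<or> (\<exists>i k. x = L i \<and> y = X k \<and> k < n_extra v w \<and> i = g k)"
  by (cases x; cases y) (auto simp: ch_eq)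

lemma cadj_L: "cadj v w g x y \<Longrightarrow> (isL x \<and> \<not> isL y) \<or> (\<not> isL x \<and> isL y)"
  unfolding cadj_def isL_def by (auto dest!: cedge_cases)

lemma cadj_cases:
  "cadj v w g x z \<Longrightarrow> \<not> isL z \<Longrightarrow>
    (\<exists>a b. z = P a b \<and> a < (v+1) div 2 \<and> (v+1) div 2 \<le> b \<and> b < v \<and> (x = L a \<or> x = L b))
     \<or> (\<exists>k. z = X k \<and> k < n_extra v w \<and> x = L (g k))"
  unfolding cadj_def isL_def by (auto dest!: cedge_cases)

lemma cadj_sig:
  assumes "cadj v w g x z" "cadj v w g y z" "x \<noteq> y" "\<not> isL z"
  shows "sig ((v+1) div 2) x \<noteq> sig ((v+1) div 2) y"
  using cadj_cases[OF assms(1,4)] cadj_cases[OF assms(2,4)] assms(3)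
  by (auto simp: sig_def)

lemma cadj_uniq:
  assumes "cadj v w g x z" "cadj v w g y z" "cadj v w g x z'" "cadj v w g y z'" "x \<noteq> y" "\<not> isL z" "\<not> isL z'"
  shows "z = z'"
  using cadj_cases[OF assms(1,6)] cadj_cases[OF assms(2,6)] cadj_cases[OF assms(3,7)] cadj_cases[OF assms(4,7)] assms(5)
  by auto

lemma no4:
  "\<not> has_cycle (cadj v w g) 4"
proof
  assume "has_cycle (cadj v w g) 4"
  then obtain a b c d where h: "distinct [a,b,c,d]" "cadj v w g a b" "cadj v w g b c" "cadj v w g c d" "cadj v w g d a"
    using cyc4_inv by blast
  have s: "cadj v w g b a" "cadj v w g c b" "cadj v w g d c" "cadj v w g a d" using h cadj_sym by blast+
  show False
  proof (cases "isL a")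
    case True
    then have "\<not> isL b" "isL c" "\<not> isL d" using cadj_L h(2,3,4) by blast+
    then have "b = d" using cadj_uniq[of v w g a b c d] h s True by auto
    then show False using h(1) by simp
  next
    case False
    then have "isL b" "\<not> isL c" "isL d" using cadj_L h(2,3,4) by blast+
    then have "a = c" using cadj_uniq[of v w g b a d c] h s False by auto
    then show False using h(1) by simp
  qed
qed

lemma no6:
  "\<not> has_cycle (cadj v w g) 6"
proof
  assume "has_cycle (cadj v w g) 6"
  then obtain a b c d e f where h: "distinct [a,b,c,d,e,f]" "cadj v w g a b" "cadj v w g b c" "cadj v w g c d"
    "cadj v w g d e" "cadj v w g e f" "cadj v w g f a"
    using cyc6_inv by blast
  have s: "cadj v w g b a" "cadj v w g c b" "cadj v w g d c" "cadj v w g e d" "cadj v w g f e" "cadj v w g a f"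
    using h cadj_sym by blast+
  define \<sigma> where "\<sigma> = sig ((v+1) div 2)"
  show False
  proof (cases "isL a")
    case True
    then have "\<not> isL b" "isL c" "\<not> isL d" "isL e" "\<not> isL f" using cadj_L h(2-6) by blast+
    then have "\<sigma> a \<noteq> \<sigma> c" "\<sigma> c \<noteq> \<sigma> e" "\<sigma> e \<noteq> \<sigma> a"
      using cadj_sig[of v w g a b c] cadj_sig[of v w g c d e] cadj_sig[of v w g e f a] h s
      unfolding \<sigma>_def by auto
    then show False by blast
  next
    case False
    then have "isL b" "\<not> isL c" "isL d" "\<not> isL e" "isL f" using cadj_L h(2-6) by blast+
    then have "\<sigma> b \<noteq> \<sigma> d" "\<sigma> d \<noteq> \<sigma> f" "\<sigma> f \<noteq> \<sigma> b"
      using cadj_sig[of v w g b c d] cadj_sig[of v w g d e f] cadj_sig[of v w g f a b] h s False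
      unfolding \<sigma>_def by auto
    then show False by blast
  qed
qed



lemma cW_eq: "cW v w = (\<lambda>(a,b). P a b) ` ({..<(v+1) div 2} \<times> {(v+1) div 2..<v}) \<union> X ` {..<n_extra v w}"
  unfolding cW_def ch_eq by auto

lemma cedge_mem:
  assumes "cedge v w g x y" "\<forall>k. g k < v"
  shows "x \<in> cV v \<and> y \<in> cW v w"
  using cedge_cases[OF assms(1)] assms(2) unfolding cV_def cW_eq by force

lemma bip_c:
  assumes "\<forall>k. g k < v"
  shows "bipartite_graph (cadj v w g) (cV v) (cW v w)"
  unfolding bipartite_graph_def
proof (intro conjI allI impI)
  show "finite (cV v)" unfolding cV_def by simp
  show "finite (cW v w)" unfolding cW_eq by simp
  show "cV v \<inter> cW v w = {}" unfolding cV_def cW_eq by auto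
  fix x y
  show "cadj v w g x y = cadj v w g y x" by (rule cadj_sym)
  show "\<not> cadj v w g x x" unfolding cadj_def by (auto dest!: cedge_cases)
  assume "cadj v w g x y"
  then show "x \<in> cV v \<and> y \<in> cW v w \<or> x \<in> cW v w \<and> y \<in> cV v"
    unfolding cadj_def using cedge_mem[OF _ assms] by blast
qed

lemma card_cV: "card (cV v) = v"
  unfolding cV_def by (simp add: card_image inj_on_def)

lemma card_P: "card ((\<lambda>(a,b). P a b) ` ({..<(v+1) div 2} \<times> {(v+1) div 2..<v})) = v ^ 2 div 4"
proof -
  have "inj_on (\<lambda>(a,b). P a b) ({..<(v+1) div 2} \<times> {(v+1) div 2..<v})" by (auto simp: inj_on_def)
  then have "card ((\<lambda>(a,b). P a b) ` ({..<(v+1) div 2} \<times> {(v+1) div 2..<v})) = ((v+1) div 2) * (v - (v+1) div 2)"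
    by (simp add: card_image card_cartesian_product)
  then show ?thesis by (simp only: prod_ch)
qed

lemma card_cW:
  assumes "v ^ 2 div 4 < w"
  shows "card (cW v w) = w"
proof -
  have d: "(\<lambda>(a,b). P a b) ` ({..<(v+1) div 2} \<times> {(v+1) div 2..<v}) \<inter> X ` {..<n_extra v w} = {}" by auto
  have "card (cW v w) = card ((\<lambda>(a,b). P a b) ` ({..<(v+1) div 2} \<times> {(v+1) div 2..<v})) + card (X ` {..<n_extra v w})"
    unfolding cW_eq by (rule card_Un_disjoint[OF _ _ d]) auto
  also have "\<dots> = v ^ 2 div 4 + n_extra v w"
    by (subst card_P) (simp add: card_image inj_on_def)
  finally have "card (cW v w) = v ^ 2 div 4 + n_extra v w" .
  then show ?thesis using n_extra_eq[OF assms] assms by simp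
qed

lemma edges_c:
  assumes g: "\<forall>k. g k < v" and vw: "v ^ 2 div 4 < w"
  shows "num_edges (cadj v w g) = v ^ 2 div 4 + w"
proof -
  define c where "c = (v + 1) div 2"
  define I where "I = {..<c} \<times> {c..<v}"
  define A1 where "A1 = (\<lambda>(a,b). (L a, P a b)) ` I"
  define A2 where "A2 = (\<lambda>(a,b). (L b, P a b)) ` I"
  define A3 where "A3 = (\<lambda>k. (L (g k), X k)) ` {..<n_extra v w}"
  have eq: "Ed (cadj v w g) (cV v) (cW v w) = A1 \<union> A2 \<union> A3"
  proof (rule set_eqI, rule iffI)
    fix p assume "p \<in> Ed (cadj v w g) (cV v) (cW v w)"
    then obtain x y where p: "p = (x,y)" "x \<in> cV v" "y \<in> cW v w" "cadj v w g x y" unfolding Ed_def by blast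
    obtain i where i: "x = L i" "i < v" using p(2) unfolding cV_def by blast
    have "cedge v w g x y"
    proof -
      have "\<not> cedge v w g y x" using i(1) by (auto dest!: cedge_cases)
      then show ?thesis using p(4) unfolding cadj_def by blast
    qed
    then show "p \<in> A1 \<union> A2 \<union> A3" using i p(1) unfolding A1_def A2_def A3_def I_def c_def
      by (auto dest!: cedge_cases)
  next
    fix p assume "p \<in> A1 \<union> A2 \<union> A3"
    then have "cedge v w g (fst p) (snd p)" unfolding A1_def A2_def A3_def I_def c_def
      by (auto simp: ch_eq)
    moreover have "fst p \<in> cV v \<and> snd p \<in> cW v w" by (rule cedge_mem[OF calculation g])
    ultimately show "p \<in> Ed (cadj v w g) (cV v) (cW v w)" unfolding Ed_def cadj_def by auto
  qed
  have i1: "inj_on (\<lambda>(a,b). (L a, P a b)) I" by (auto simp: inj_on_def)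
  have i2: "inj_on (\<lambda>(a,b). (L b, P a b)) I" by (auto simp: inj_on_def)
  have i3: "inj_on (\<lambda>k. (L (g k), X k)) {..<n_extra v w}" by (auto simp: inj_on_def)
  have cI: "card I = v ^ 2 div 4" unfolding I_def c_def using prod_ch by (simp add: card_cartesian_product)
  have d12: "A1 \<inter> A2 = {}" unfolding A1_def A2_def I_def by auto
  have d3: "(A1 \<union> A2) \<inter> A3 = {}" unfolding A1_def A2_def A3_def by auto
  have f: "finite A1" "finite A2" "finite A3" unfolding A1_def A2_def A3_def I_def by auto
  have "card (A1 \<union> A2 \<union> A3) = card A1 + card A2 + card A3"
    using card_Un_disjoint[OF _ _ d3] card_Un_disjoint[OF _ _ d12] f by simp
  also have "\<dots> = v ^ 2 div 4 + v ^ 2 div 4 + n_extra v w"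
    unfolding A1_def A2_def A3_def using card_image[OF i1] card_image[OF i2] card_image[OF i3] cI by simp
  also have "\<dots> = v ^ 2 div 4 + w" using n_extra_eq[OF vw] vw by simp
  finally show ?thesis using num_edges_Ed[OF bip_c[OF g]] eq by simp
qed

lemma part2:
  "\<forall>v w (g :: nat \<Rightarrow> nat).
           1 \<le> v \<and> v \<le> w \<and> \<not> (real w \<le> of_int \<lfloor>real v ^ 2 / 4\<rfloor>) \<and> (\<forall>k. g k < v) \<longrightarrow>
           bipartite_graph (cadj v w g) (cV v) (cW v w) \<and>
           card (cV v) = v \<and> card (cW v w) = w \<and>
           \<not> has_cycle (cadj v w g) 4 \<and> \<not> has_cycle (cadj v w g) 6 \<and>
           real (num_edges (cadj v w g)) = of_int \<lfloor>real v ^ 2 / 4\<rfloor> + real w"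
proof (intro allI impI)
  fix v w :: nat and g :: "nat \<Rightarrow> nat"
  assume a: "1 \<le> v \<and> v \<le> w \<and> \<not> (real w \<le> of_int \<lfloor>real v ^ 2 / 4\<rfloor>) \<and> (\<forall>k. g k < v)"
  then have g: "\<forall>k. g k < v" by blast
  have "\<not> (real w \<le> real (v ^ 2 div 4))" using a unfolding floorv by simp
  then have vw: "v ^ 2 div 4 < w" by simp
  show "bipartite_graph (cadj v w g) (cV v) (cW v w) \<and>
           card (cV v) = v \<and> card (cW v w) = w \<and>
           \<not> has_cycle (cadj v w g) 4 \<and> \<not> has_cycle (cadj v w g) 6 \<and>
           real (num_edges (cadj v w g)) = of_int \<lfloor>real v ^ 2 / 4\<rfloor> + real w"
    using bip_c[OF g] card_cV card_cW[OF vw] no4 no6 edges_c[OF g vw] unfolding floorv by simp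
qed

theorem proposition4p10:
  fixes adj :: "'a \<Rightarrow> 'a \<Rightarrow> bool" and V W :: "'a set"
  assumes "bipartite_graph adj V W"
    and "\<not> has_cycle adj 4" and "\<not> has_cycle adj 6"
  shows "(real (num_edges adj) \<le>
           (if real (max (card V) (card W)) \<le> of_int \<lfloor>real (min (card V) (card W)) ^ 2 / 4\<rfloor>
            then 2 powr (1/3) * (real (card V) * real (card W)) powr (2/3)
            else of_int \<lfloor>real (min (card V) (card W)) ^ 2 / 4\<rfloor> + real (max (card V) (card W)))) \<and>
         (\<forall>v w (g :: nat \<Rightarrow> nat).
           1 \<le> v \<and> v \<le> w \<and> \<not> (real w \<le> of_int \<lfloor>real v ^ 2 / 4\<rfloor>) \<and> (\<forall>k. g k < v) \<longrightarrow>
           bipartite_graph (cadj v w g) (cV v) (cW v w) \<and>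
           card (cV v) = v \<and> card (cW v w) = w \<and>
           \<not> has_cycle (cadj v w g) 4 \<and> \<not> has_cycle (cadj v w g) 6 \<and>
           real (num_edges (cadj v w g)) = of_int \<lfloor>real v ^ 2 / 4\<rfloor> + real w)"
  using part1[OF assms] part2 by blast

end
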